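(* Let $S$ be a finite set of red and blue points in the plane in general position, containing at least one point of each color, and let $T$ be a minimum bichromatic spanning tree of $S$. Let $e_1$ and $e_2$ be two edges of $T$ that cross each other, and let $\pi(e_1,e_2)$ denote the unique shortest path in $T$ that contains exactly one endpoint of $e_1$ and exactly one endpoint of $e_2$ (i.e., the path in $T$ joining the endpoint of $e_1$ closest to $e_2$ with the endpoint of $e_2$ closest to $e_1$). Then the two endpoints of $\pi(e_1,e_2)$ have different colors.
   Context: A set of points is in general position if no three of them are collinear. A bichromatic spanning tree of a set $S$ of red and blue points is a spanning tree on vertex set $S$, drawn with straight-line segment edges, in which every edge has one red and one blue endpoint. A minimum bichromatic spanning tree (MinBST) is a bichromatic spanning tree of minimum total Euclidean edge length. Two edges (segments) cross if they share a point that is interior to both segments. *)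

theory Defs
  imports "HOL-Analysis.Analysis"
begin

type_synonym point = "real^2"

text \<open>Undirected straight-line graphs: an edge is a two-element set of points.\<close>

definition general_position :: "point set \<Rightarrow> bool" where
  "general_position S \<longleftrightarrow>
     (\<forall>a\<in>S. \<forall>b\<in>S. \<forall>c\<in>S. a \<noteq> b \<and> a \<noteq> c \<and> b \<noteq> c \<longrightarrow> \<not> collinear {a, b, c})"

definition is_path :: "'a set set \<Rightarrow> 'a list \<Rightarrow> bool" where
  "is_path E p \<longleftrightarrow> p \<noteq> [] \<and> distinct p \<and>
     (\<forall>i. Suc i < length p \<longrightarrow> {p ! i, p ! Suc i} \<in> E)"

definition graph_connected :: "'a set \<Rightarrow> 'a set set \<Rightarrow> bool" where
  "graph_connected V E \<longleftrightarrow>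
     (\<forall>u\<in>V. \<forall>v\<in>V. \<exists>p. is_path E p \<and> hd p = u \<and> last p = v)"

definition graph_acyclic :: "'a set set \<Rightarrow> bool" where
  "graph_acyclic E \<longleftrightarrow>
     \<not> (\<exists>c. 3 \<le> length c \<and> is_path E c \<and> {last c, hd c} \<in> E)"

definition spanning_tree :: "'a set \<Rightarrow> 'a set set \<Rightarrow> bool" where
  "spanning_tree V E \<longleftrightarrow>
     (\<forall>e\<in>E. \<exists>u v. e = {u, v} \<and> u \<noteq> v \<and> u \<in> V \<and> v \<in> V)
     \<and> graph_connected V E \<and> graph_acyclic E"

definition bichromatic_spanning_tree ::
  "'a set \<Rightarrow> 'a set \<Rightarrow> 'a set \<Rightarrow> 'a set set \<Rightarrow> bool" where
  "bichromatic_spanning_tree S R B E \<longleftrightarrow>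
     spanning_tree S E \<and> (\<forall>e\<in>E. \<exists>r b. r \<in> R \<and> b \<in> B \<and> e = {r, b})"

definition edge_length :: "point set \<Rightarrow> real" where
  "edge_length e = (THE d. \<exists>x y. e = {x, y} \<and> d = dist x y)"

definition total_length :: "point set set \<Rightarrow> real" where
  "total_length E = (\<Sum>e\<in>E. edge_length e)"

definition MinBST :: "point set \<Rightarrow> point set \<Rightarrow> point set \<Rightarrow> point set set \<Rightarrow> bool" where
  "MinBST S R B T \<longleftrightarrow> bichromatic_spanning_tree S R B T \<and>
     (\<forall>T'. bichromatic_spanning_tree S R B T' \<longrightarrow> total_length T \<le> total_length T')"

definition edges_cross :: "point set \<Rightarrow> point set \<Rightarrow> bool" where
  "edges_cross e1 e2 \<longleftrightarrow> (\<exists>a b c d. e1 = {a, b} \<and> e2 = {c, d} \<and>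
     open_segment a b \<inter> open_segment c d \<noteq> {})"

definition joining_path :: "'a set set \<Rightarrow> 'a set \<Rightarrow> 'a set \<Rightarrow> 'a list \<Rightarrow> bool" where
  "joining_path T e1 e2 p \<longleftrightarrow> is_path T p \<and>
     card (set p \<inter> e1) = 1 \<and> card (set p \<inter> e2) = 1"

end

theory Submission
  imports Defs
begin


lemma coll_seg:
  fixes a b c x :: point
  assumes "x \<in> closed_segment a c" "x \<in> open_segment a b"
  shows "collinear {a,b,c}"
proof -
  have xa: "x \<noteq> a" using assms(2) by (auto simp: open_segment_def)
  have 1: "collinear {c,a,x}"
    by (rule collinear_subset[OF collinear_closed_segment[of a c]]) (use assms(1) in auto)
  have 2: "collinear {a,x,b}"
    by (rule collinear_subset[OF collinear_closed_segment[of a b]]) (use assms(2) open_closed_segment in auto)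
  have "collinear {c,a,b}" using collinear_3_trans[OF 1 2] xa by auto
  then show ?thesis by (simp add: insert_commute)
qed

lemma geo:
  fixes a b c d x :: point
  assumes "x \<in> open_segment a b" "x \<in> open_segment c d" "\<not> collinear {a,b,c}"
  shows "dist a c + dist b d < dist a b + dist c d"
proof -
  have ab: "dist a b = dist a x + dist x b"
    using open_closed_segment[OF assms(1)] between between_mem_segment by blast
  have cd: "dist c d = dist c x + dist x d"
    using open_closed_segment[OF assms(2)] between between_mem_segment by blast
  have "dist a c < dist a x + dist x c"
  proof -
    have "dist a c \<noteq> dist a x + dist x c"
    proof
      assume "dist a c = dist a x + dist x c"
      then have "x \<in> closed_segment a c" using between between_mem_segment by blast
      then show False using coll_seg assms by blast
    qed
    moreover have "dist a c \<le> dist a x + dist x c" by (rule dist_triangle)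
    ultimately show ?thesis by linarith
  qed
  moreover have "dist b d \<le> dist b x + dist x d" by (rule dist_triangle)
  ultimately show ?thesis using ab cd by (simp add: dist_commute)
qed

lemma disj_cross:
  fixes a b c d x :: point
  assumes "x \<in> open_segment a b" "x \<in> open_segment a d"
  shows "collinear {a,b,d}"
  using coll_seg[OF open_closed_segment[OF assms(2)] assms(1)] .



definition adj :: "'a set set \<Rightarrow> ('a \<times> 'a) set" where
  "adj E = {(x,y). {x,y} \<in> E}"

lemma is_path_Cons:
  "is_path E (x # p) \<longleftrightarrow> (p = [] \<or> (is_path E p \<and> x \<notin> set p \<and> {x, hd p} \<in> E))"
proof (cases p)
  case Nil then show ?thesis by (simp add: is_path_def)
next
  case (Cons y q)
  show ?thesis
  proof
    assume h: "is_path E (x # p)"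
    have e: "{(x#p) ! i, (x#p) ! Suc i} \<in> E" if "Suc i < length (x#p)" for i
      using h that unfolding is_path_def by blast
    have "{p ! i, p ! Suc i} \<in> E" if "Suc i < length p" for i
      using e[of "Suc i"] that by simp
    moreover have "{x, hd p} \<in> E" using e[of 0] Cons by simp
    moreover have "distinct (x # p)" using h unfolding is_path_def by blast
    ultimately show "p = [] \<or> (is_path E p \<and> x \<notin> set p \<and> {x, hd p} \<in> E)"
      using Cons unfolding is_path_def by simp
  next
    assume h: "p = [] \<or> (is_path E p \<and> x \<notin> set p \<and> {x, hd p} \<in> E)"
    then have h: "is_path E p" "x \<notin> set p" "{x, hd p} \<in> E" using Cons by auto
    have "{(x#p) ! i, (x#p) ! Suc i} \<in> E" if "Suc i < length (x#p)" for i
    proof (cases i)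
      case 0 then show ?thesis using h Cons by simp
    next
      case (Suc j) then show ?thesis using h(1) that unfolding is_path_def by simp
    qed
    then show "is_path E (x # p)" using h unfolding is_path_def by simp
  qed
qed

lemma path_rtrancl: "is_path E p \<Longrightarrow> (hd p, last p) \<in> (adj E)\<^sup>*"
proof (induction p)
  case Nil then show ?case by (simp add: is_path_def)
next
  case (Cons x p)
  show ?case
  proof (cases "p = []")
    case True then show ?thesis by simp
  next
    case False
    then have "is_path E p" "{x, hd p} \<in> E" using Cons.prems by (simp_all add: is_path_Cons)
    then have 1: "(hd p, last p) \<in> (adj E)\<^sup>*" "(x, hd p) \<in> adj E"
      using Cons.IH by (auto simp: adj_def)
    have "(x, last p) \<in> (adj E)\<^sup>*" by (rule converse_rtrancl_into_rtrancl[OF 1(2) 1(1)])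
    then show ?thesis using False by simp
  qed
qed

lemma is_path_drop: "is_path E p \<Longrightarrow> i < length p \<Longrightarrow> is_path E (drop i p)"
  unfolding is_path_def
proof (intro conjI allI impI)
  fix k assume h: "p \<noteq> [] \<and> distinct p \<and> (\<forall>i. Suc i < length p \<longrightarrow> {p ! i, p ! Suc i} \<in> E)"
    "i < length p" "Suc k < length (drop i p)"
  then have "{p ! (i + k), p ! Suc (i + k)} \<in> E" by auto
  then show "{drop i p ! k, drop i p ! Suc k} \<in> E" using h by simp
qed (auto)

lemma rtrancl_path: "(x,y) \<in> (adj E)\<^sup>* \<Longrightarrow> \<exists>p. is_path E p \<and> hd p = x \<and> last p = y"
proof (induction rule: converse_rtrancl_induct)
  case base
  then show ?case by (rule exI[of _ "[y]"]) (simp add: is_path_def)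
next
  case (step x z)
  then obtain p where p: "is_path E p" "hd p = z" "last p = y" by blast
  show ?case
  proof (cases "x \<in> set p")
    case True
    then obtain i where i: "i < length p" "p ! i = x" by (meson in_set_conv_nth)
    have "is_path E (drop i p)" using is_path_drop[OF p(1) i(1)] .
    moreover have "hd (drop i p) = x" using i by (simp add: hd_drop_conv_nth)
    moreover have "last (drop i p) = y" using i p(3) by simp
    ultimately show ?thesis by blast
  next
    case False
    have "p \<noteq> []" using p by (simp add: is_path_def)
    then show ?thesis using False p step(1)
      by (intro exI[of _ "x # p"]) (auto simp: is_path_Cons adj_def)
  qed
qed

lemma conn_iff: "graph_connected V E \<longleftrightarrow> (\<forall>u\<in>V. \<forall>v\<in>V. (u,v) \<in> (adj E)\<^sup>*)"
proof -
  have "(\<exists>p. is_path E p \<and> hd p = u \<and> last p = v) \<longleftrightarrow> (u,v) \<in> (adj E)\<^sup>*" for u v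
  proof
    assume "\<exists>p. is_path E p \<and> hd p = u \<and> last p = v"
    then obtain p where "is_path E p" "hd p = u" "last p = v" by blast
    then show "(u,v) \<in> (adj E)\<^sup>*" using path_rtrancl[of E p] by simp
  next
    assume "(u,v) \<in> (adj E)\<^sup>*"
    then show "\<exists>p. is_path E p \<and> hd p = u \<and> last p = v" by (rule rtrancl_path)
  qed
  then show ?thesis unfolding graph_connected_def by presburger
qed

lemma is_path_rev: "is_path E p \<Longrightarrow> is_path E (rev p)"
  unfolding is_path_def
proof (intro conjI allI impI)
  fix i assume h: "p \<noteq> [] \<and> distinct p \<and> (\<forall>i. Suc i < length p \<longrightarrow> {p ! i, p ! Suc i} \<in> E)"
    "Suc i < length (rev p)"
  define j where "j = length p - Suc (Suc i)"
  have 1: "Suc j < length p" using h(2) unfolding j_def by simp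
  have 2: "Suc j = length p - Suc i" using h(2) unfolding j_def by simp
  have "{p ! j, p ! Suc j} \<in> E" using h(1) 1 by blast
  moreover have "rev p ! i = p ! Suc j" using h(2) 2 by (simp add: rev_nth)
  moreover have "rev p ! Suc i = p ! j" using h(2) unfolding j_def by (simp add: rev_nth)
  ultimately show "{rev p ! i, rev p ! Suc i} \<in> E" by (simp add: insert_commute)
qed (simp_all)


lemma is_path_mono:
  assumes "is_path E p" "\<forall>i. Suc i < length p \<longrightarrow> {p ! i, p ! Suc i} \<in> F"
  shows "is_path F p"
  using assms unfolding is_path_def by blast

lemma is_path_take: "is_path E p \<Longrightarrow> 0 < k \<Longrightarrow> is_path E (take k p)"
  unfolding is_path_def
proof (intro conjI allI impI)
  fix i assume h: "p \<noteq> [] \<and> distinct p \<and> (\<forall>i. Suc i < length p \<longrightarrow> {p ! i, p ! Suc i} \<in> E)"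
    "0 < k" "Suc i < length (take k p)"
  then have "Suc i < length p" "Suc i < k" by auto
  then have "{p ! i, p ! Suc i} \<in> E" using h(1) by blast
  then show "{take k p ! i, take k p ! Suc i} \<in> E" using \<open>Suc i < k\<close> by simp
qed (auto)

lemma sub_path:
  assumes "is_path E p" "i \<le> j" "j < length p"
  shows "\<exists>q. is_path E q \<and> set q \<subseteq> set p \<and> hd q = p ! i \<and> last q = p ! j \<and> length q = j - i + 1"
proof -
  define q where "q = take (j - i + 1) (drop i p)"
  have "is_path E (drop i p)" using is_path_drop assms by fastforce
  then have "is_path E q" unfolding q_def by (rule is_path_take) simp
  moreover have "set q \<subseteq> set p" unfolding q_def by (meson in_set_takeD in_set_dropD subsetI)
  moreover have "length q = j - i + 1" unfolding q_def using assms by simp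
  moreover have "hd q = p ! i" unfolding q_def using assms
    by (simp add: hd_take hd_drop_conv_nth)
  moreover have "last q = p ! j" 
  proof -
    have "q \<noteq> []" using \<open>length q = j - i + 1\<close> by auto
    then have "last q = q ! (j - i)" using \<open>length q = j - i + 1\<close> by (simp add: last_conv_nth)
    also have "\<dots> = p ! j" unfolding q_def using assms by simp
    finally show ?thesis .
  qed
  ultimately show ?thesis by blast
qed

lemma adj_conv: "(adj E)\<inverse> = adj E"
  unfolding adj_def by (auto simp: insert_commute)

lemma rt_sym: "(x,y) \<in> (adj E)\<^sup>* \<Longrightarrow> (y,x) \<in> (adj E)\<^sup>*"
  by (metis adj_conv rtrancl_converseI)

lemma cycle_edges:
  assumes "is_path F c" "3 \<le> length c" "Suc i < length c"
  shows "{c ! i, c ! Suc i} \<noteq> {last c, hd c}"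
proof
  assume eq: "{c ! i, c ! Suc i} = {last c, hd c}"
  have d: "distinct c" using assms(1) unfolding is_path_def by blast
  have ne: "c \<noteq> []" using assms(2) by auto
  have l: "last c = c ! (length c - 1)" "hd c = c ! 0" using ne
    by (simp_all add: last_conv_nth hd_conv_nth)
  have "(c ! i = c ! (length c - 1) \<and> c ! Suc i = c ! 0) \<or> (c ! i = c ! 0 \<and> c ! Suc i = c ! (length c - 1))"
    using eq l by (auto simp: doubleton_eq_iff)
  then show False
  proof
    assume h: "c ! i = c ! (length c - 1) \<and> c ! Suc i = c ! 0"
    then have "i = length c - 1" using d assms by (simp add: nth_eq_iff_index_eq)
    then show False using assms by simp
  next
    assume h: "c ! i = c ! 0 \<and> c ! Suc i = c ! (length c - 1)"
    have "i < length c" "0 < length c" using assms by auto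
    then have "i = 0" using h nth_eq_iff_index_eq[OF d] by blast
    moreover have "Suc i < length c" "length c - 1 < length c" using assms by auto
    then have "Suc i = length c - 1" using h nth_eq_iff_index_eq[OF d] by blast
    ultimately show False using assms by simp
  qed
qed

lemma sub_tree:
  assumes fin: "finite E"
    and wf: "\<forall>e\<in>E. \<exists>u v. e = {u, v} \<and> u \<noteq> v \<and> u \<in> V \<and> v \<in> V"
    and bi: "\<forall>e\<in>E. \<exists>r b. r \<in> R \<and> b \<in> B \<and> e = {r, b}"
    and conn: "\<forall>u\<in>V. \<forall>v\<in>V. (u,v) \<in> (adj E)\<^sup>*"
  shows "\<exists>F\<subseteq>E. bichromatic_spanning_tree V R B F"
proof -
  define P where "P k \<longleftrightarrow> (\<exists>F\<subseteq>E. (\<forall>u\<in>V. \<forall>v\<in>V. (u,v) \<in> (adj F)\<^sup>*) \<and> card F = k)" for k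
  have "P (card E)" unfolding P_def using conn by blast
  define m where "m = (LEAST k. P k)"
  have m: "P m" "\<And>k. P k \<Longrightarrow> m \<le> k"
    unfolding m_def using \<open>P (card E)\<close> by (rule LeastI) (rule Least_le)
  then obtain F where F: "F \<subseteq> E" "\<forall>u\<in>V. \<forall>v\<in>V. (u,v) \<in> (adj F)\<^sup>*" "card F = m"
    unfolding P_def by blast
  have finF: "finite F" using F(1) fin finite_subset by blast
  have acyc: "graph_acyclic F"
    unfolding graph_acyclic_def
  proof
    assume "\<exists>c. 3 \<le> length c \<and> is_path F c \<and> {last c, hd c} \<in> F"
    then obtain c where c: "3 \<le> length c" "is_path F c" "{last c, hd c} \<in> F" by blast
    define G where "G = F - {{last c, hd c}}"
    have "is_path G c"
    proof (rule is_path_mono[OF c(2)], intro allI impI)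
      fix i assume i: "Suc i < length c"
      have "{c ! i, c ! Suc i} \<in> F" using c(2) i unfolding is_path_def by blast
      then show "{c ! i, c ! Suc i} \<in> G" unfolding G_def using cycle_edges[OF c(2) c(1) i] by blast
    qed
    then have hl: "(hd c, last c) \<in> (adj G)\<^sup>*" by (rule path_rtrancl)
    have sub: "adj F \<subseteq> (adj G)\<^sup>*"
    proof
      fix z assume "z \<in> adj F"
      then obtain x y where z: "z = (x,y)" "{x,y} \<in> F" unfolding adj_def by blast
      show "z \<in> (adj G)\<^sup>*"
      proof (cases "{x,y} = {last c, hd c}")
        case True
        then have "(x = last c \<and> y = hd c) \<or> (x = hd c \<and> y = last c)" by (auto simp: doubleton_eq_iff)
        then show ?thesis
        proof
          assume "x = last c \<and> y = hd c"
          then show ?thesis using rt_sym[OF hl] z(1) by simp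
        next
          assume "x = hd c \<and> y = last c"
          then show ?thesis using hl z(1) by simp
        qed
      next
        case False
        then have "(x,y) \<in> adj G" using z unfolding G_def adj_def by blast
        then show ?thesis using z by blast
      qed
    qed
    have "(adj F)\<^sup>* \<subseteq> (adj G)\<^sup>*"
      using rtrancl_subset_rtrancl[OF sub] .
    then have "\<forall>u\<in>V. \<forall>v\<in>V. (u,v) \<in> (adj G)\<^sup>*" using F(2) by blast
    moreover have "G \<subseteq> E" using F(1) unfolding G_def by blast
    ultimately have "P (card G)" unfolding P_def by blast
    then have "m \<le> card G" by (rule m(2))
    moreover have "card G < card F" unfolding G_def using c(3) finF by (meson card_Diff1_less)
    ultimately show False using F(3) by simp
  qed
  have "graph_connected V F" unfolding conn_iff using F(2) .
  moreover have "\<forall>e\<in>F. \<exists>u v. e = {u, v} \<and> u \<noteq> v \<and> u \<in> V \<and> v \<in> V" using F(1) wf by blast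
  moreover have "\<forall>e\<in>F. \<exists>r b. r \<in> R \<and> b \<in> B \<and> e = {r, b}" using F(1) bi by blast
  ultimately have "bichromatic_spanning_tree V R B F"
    unfolding bichromatic_spanning_tree_def spanning_tree_def using acyc by blast
  then show ?thesis using F(1) by blast
qed



lemma edge_length_eq: "edge_length {x, y} = dist x y"
  unfolding edge_length_def
proof (rule the_equality)
  show "\<exists>x' y'. {x, y} = {x', y'} \<and> dist x y = dist x' y'" by blast
next
  fix d assume "\<exists>x' y'. {x, y} = {x', y'} \<and> d = dist x' y'"
  then obtain x' y' where "{x, y} = {x', y'}" "d = dist x' y'" by blast
  then show "d = dist x y" by (auto simp: doubleton_eq_iff dist_commute)
qed

lemma tree_finite:
  assumes "finite S" "bichromatic_spanning_tree S R B T"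
  shows "finite T"
proof -
  have w: "\<forall>e\<in>T. \<exists>x y. e = {x, y} \<and> x \<noteq> y \<and> x \<in> S \<and> y \<in> S"
    using assms(2) unfolding bichromatic_spanning_tree_def spanning_tree_def by (elim conjE) assumption
  have "T \<subseteq> Pow S"
  proof
    fix e assume "e \<in> T"
    then obtain x y where "e = {x, y}" "x \<in> S" "y \<in> S" using w by blast
    then show "e \<in> Pow S" by simp
  qed
  then show ?thesis using assms(1) by (meson finite_Pow_iff finite_subset)
qed

lemma len_nonneg:
  assumes "bichromatic_spanning_tree S R B T" "e \<in> T"
  shows "0 \<le> edge_length e"
proof -
  have w: "\<forall>e\<in>T. \<exists>x y. e = {x, y} \<and> x \<noteq> y \<and> x \<in> S \<and> y \<in> S"
    using assms(1) unfolding bichromatic_spanning_tree_def spanning_tree_def by (elim conjE) assumption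
  obtain u v where "e = {u,v}" using w assms(2) by blast
  then show ?thesis by (simp add: edge_length_eq)
qed

lemma exch:
  assumes fin: "finite S" and RB: "R \<union> B = S"
    and M: "MinBST S R B T" and e: "{u,v} \<in> T"
    and q: "is_path T q" "hd q = v" "last q = w" "u \<notin> set q" "w \<in> S"
    and col: "(u \<in> R \<and> w \<in> B) \<or> (u \<in> B \<and> w \<in> R)"
    and lt: "dist u w < dist u v"
  shows False
proof -
  have bst: "bichromatic_spanning_tree S R B T" using M unfolding MinBST_def by (elim conjE) 
  have minT: "\<And>T'. bichromatic_spanning_tree S R B T' \<Longrightarrow> total_length T \<le> total_length T'"
    using M unfolding MinBST_def by blast
  have finT: "finite T" using tree_finite[OF fin bst] .
  have wfT: "\<forall>e\<in>T. \<exists>x y. e = {x, y} \<and> x \<noteq> y \<and> x \<in> S \<and> y \<in> S"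
    using bst unfolding bichromatic_spanning_tree_def spanning_tree_def by (elim conjE) assumption
  have conT: "graph_connected S T"
    using bst unfolding bichromatic_spanning_tree_def spanning_tree_def by (elim conjE) assumption
  have biT: "\<forall>e\<in>T. \<exists>r b. r \<in> R \<and> b \<in> B \<and> e = {r, b}"
    using bst unfolding bichromatic_spanning_tree_def spanning_tree_def by (elim conjE) assumption
  obtain x0 y0 where xy0: "{u,v} = {x0,y0}" "x0 \<in> S" "y0 \<in> S" using wfT e by blast
  have uS: "u \<in> S" using xy0 by (auto simp: doubleton_eq_iff)
  have qne: "q \<noteq> []" using q(1) unfolding is_path_def by blast
  have wq: "w \<in> set q" using last_in_set[OF qne] q(3) by simp
  have uw: "u \<noteq> w" using wq q(4) by blast
  define T' where "T' = insert {u,w} (T - {{u,v}})"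
  have finT': "finite T'" unfolding T'_def using finT by simp
  have wfT': "\<forall>e\<in>T'. \<exists>x y. e = {x, y} \<and> x \<noteq> y \<and> x \<in> S \<and> y \<in> S"
  proof
    fix e assume "e \<in> T'"
    then have "e = {u,w} \<or> e \<in> T" unfolding T'_def by blast
    then show "\<exists>x y. e = {x, y} \<and> x \<noteq> y \<and> x \<in> S \<and> y \<in> S"
    proof
      assume "e = {u,w}" then show ?thesis using uw uS q(5) by blast
    next
      assume "e \<in> T" then show ?thesis using wfT by blast
    qed
  qed
  have biT': "\<forall>e\<in>T'. \<exists>r b. r \<in> R \<and> b \<in> B \<and> e = {r, b}"
  proof
    fix e assume "e \<in> T'"
    then have "e = {u,w} \<or> e \<in> T" unfolding T'_def by blast
    then show "\<exists>r b. r \<in> R \<and> b \<in> B \<and> e = {r, b}"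
    proof
      assume eu: "e = {u,w}"
      show ?thesis using col
      proof
        assume "u \<in> R \<and> w \<in> B" then show ?thesis using eu by blast
      next
        assume "u \<in> B \<and> w \<in> R" then show ?thesis using eu insert_commute by metis
      qed
    next
      assume "e \<in> T" then show ?thesis using biT by blast
    qed
  qed
  have qT': "is_path T' q"
  proof (rule is_path_mono[OF q(1)], intro allI impI)
    fix i assume i: "Suc i < length q"
    have "{q ! i, q ! Suc i} \<in> T" using q(1) i unfolding is_path_def by blast
    moreover have "q ! i \<noteq> u" "q ! Suc i \<noteq> u" using q(4) i by (auto simp: nth_mem)
    ultimately show "{q ! i, q ! Suc i} \<in> T'" unfolding T'_def by (auto simp: doubleton_eq_iff)
  qed
  have vw: "(v, w) \<in> (adj T')\<^sup>*" using path_rtrancl[OF qT'] q(2,3) by simp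
  have wu: "(w, u) \<in> adj T'" unfolding T'_def adj_def by (auto simp: insert_commute)
  have vu: "(v, u) \<in> (adj T')\<^sup>*" using vw wu by (rule rtrancl_into_rtrancl)
  have sub: "adj T \<subseteq> (adj T')\<^sup>*"
  proof
    fix z assume "z \<in> adj T"
    then obtain x y where z: "z = (x,y)" "{x,y} \<in> T" unfolding adj_def by blast
    show "z \<in> (adj T')\<^sup>*"
    proof (cases "{x,y} = {u,v}")
      case True
      then have "(x = u \<and> y = v) \<or> (x = v \<and> y = u)" by (auto simp: doubleton_eq_iff)
      then show ?thesis
      proof
        assume "x = u \<and> y = v" then show ?thesis using rt_sym[OF vu] z(1) by simp
      next
        assume "x = v \<and> y = u" then show ?thesis using vu z(1) by simp
      qed
    next
      case False
      then have "(x,y) \<in> adj T'" using z unfolding T'_def adj_def by blast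
      then show ?thesis using z by blast
    qed
  qed
  have "(adj T)\<^sup>* \<subseteq> (adj T')\<^sup>*" using rtrancl_subset_rtrancl[OF sub] .
  then have conT': "\<forall>x\<in>S. \<forall>y\<in>S. (x,y) \<in> (adj T')\<^sup>*" using conT unfolding conn_iff by blast
  obtain F where F: "F \<subseteq> T'" "bichromatic_spanning_tree S R B F"
    using sub_tree[OF finT' wfT' biT' conT'] by blast
  have nn: "\<forall>e\<in>T'. 0 \<le> edge_length e"
  proof
    fix e assume "e \<in> T'"
    then obtain x y where "e = {x,y}" using wfT' by blast
    then show "0 \<le> edge_length e" by (simp add: edge_length_eq)
  qed
  have "total_length F \<le> total_length T'"
    unfolding total_length_def using sum_mono2[OF finT' F(1)] nn by blast
  also have "total_length T' \<le> total_length (T - {{u,v}}) + dist u w"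
  proof -
    have "total_length T' = (if {u,w} \<in> T - {{u,v}} then total_length (T - {{u,v}})
          else edge_length {u,w} + total_length (T - {{u,v}}))"
      unfolding T'_def total_length_def using finT by (simp add: sum.insert_if)
    then show ?thesis by (simp add: edge_length_eq split: if_splits)
  qed
  also have "\<dots> < total_length (T - {{u,v}}) + dist u v" using lt by simp
  also have "\<dots> = total_length T"
    unfolding total_length_def using sum.remove[OF finT e, of edge_length] by (simp add: edge_length_eq)
  finally have "total_length F < total_length T" .
  then show False using minT[OF F(2)] by simp
qed



lemma min_path:
  assumes jp: "joining_path T e1 e2 p"
    and mn: "\<forall>q. joining_path T e1 e2 q \<longrightarrow> length p \<le> length q"
    and dj: "e1 \<inter> e2 = {}"
  shows "(hd p \<in> e1 \<and> last p \<in> e2) \<or> (hd p \<in> e2 \<and> last p \<in> e1)"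
proof -
  have pp: "is_path T p" using jp unfolding joining_path_def by (elim conjE)
  have c1: "card (set p \<inter> e1) = 1" using jp unfolding joining_path_def by (elim conjE)
  have c2: "card (set p \<inter> e2) = 1" using jp unfolding joining_path_def by (elim conjE)
  obtain y1 where y1: "set p \<inter> e1 = {y1}" using c1 card_1_singletonE by blast
  obtain y2 where y2: "set p \<inter> e2 = {y2}" using c2 card_1_singletonE by blast
  obtain i where i: "i < length p" "p ! i = y1" using y1 by (metis IntD1 in_set_conv_nth insertI1)
  obtain j where j: "j < length p" "p ! j = y2" using y2 by (metis IntD1 in_set_conv_nth insertI1)
  have y1e: "y1 \<in> e1" and y2e: "y2 \<in> e2" using y1 y2 by auto
  define lo where "lo = min i j"
  define hi where "hi = max i j"
  have lh: "lo \<le> hi" "hi < length p" unfolding lo_def hi_def using i j by auto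
  obtain q where q: "is_path T q" "set q \<subseteq> set p" "hd q = p ! lo" "last q = p ! hi" "length q = hi - lo + 1"
    using sub_path[OF pp lh] by blast
  have qne: "q \<noteq> []" using q(5) by auto
  have "y1 \<in> set q" "y2 \<in> set q"
    using q(3,4) hd_in_set[OF qne] last_in_set[OF qne] i(2) j(2) unfolding lo_def hi_def
    by (cases "i \<le> j"; simp add: min_def max_def)+
  then have "set q \<inter> e1 = {y1}" "set q \<inter> e2 = {y2}" using q(2) y1 y2 y1e y2e by blast+
  then have "joining_path T e1 e2 q" using q(1) unfolding joining_path_def by simp
  then have "length p \<le> hi - lo + 1" using mn q(5) by metis
  then have lo0: "lo = 0" and hil: "hi = length p - 1" using lh by auto
  have pne: "p \<noteq> []" using i by auto
  have hdp: "hd p = p ! 0" and lp: "last p = p ! (length p - 1)" using pne by (simp_all add: hd_conv_nth last_conv_nth)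
  show ?thesis
  proof (cases "i \<le> j")
    case True
    then have "i = 0" "j = length p - 1" using lo0 hil unfolding lo_def hi_def by (simp_all add: min_def max_def)
    then show ?thesis using hdp lp i j y1e y2e by simp
  next
    case False
    then have "j = 0" "i = length p - 1" using lo0 hil unfolding lo_def hi_def by (simp_all add: min_def max_def)
    then show ?thesis using hdp lp i j y1e y2e by simp
  qed
qed

lemma reorder:
  assumes "e = {a0, b0}" "x \<in> open_segment a0 b0" "y \<in> e"
  shows "\<exists>a. e = {a, y} \<and> x \<in> open_segment a y"
proof -
  have "y = a0 \<or> y = b0" using assms by auto
  then show ?thesis
  proof
    assume "y = a0" then show ?thesis using assms by (metis insert_commute open_segment_commute)
  next
    assume "y = b0" then show ?thesis using assms by blast
  qed
qed

lemma seg_ne: "x \<in> open_segment a b \<Longrightarrow> a \<noteq> b"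
  by auto

lemma disjoint_edges:
  fixes a b c d x :: point
  assumes gp: "general_position S" and S: "a \<in> S" "b \<in> S" "c \<in> S" "d \<in> S"
    and x: "x \<in> open_segment a b" "x \<in> open_segment c d" and ne: "{a,b} \<noteq> {c,d}"
  shows "{a,b} \<inter> {c,d} = {}"
proof (rule ccontr)
  have gp': "\<And>p q r. p \<in> S \<Longrightarrow> q \<in> S \<Longrightarrow> r \<in> S \<Longrightarrow> p \<noteq> q \<Longrightarrow> p \<noteq> r \<Longrightarrow> q \<noteq> r \<Longrightarrow> \<not> collinear {p,q,r}"
    using gp unfolding general_position_def by blast
  have key: "\<And>p q r. x \<in> open_segment p q \<Longrightarrow> x \<in> open_segment p r \<Longrightarrow> p \<in> S \<Longrightarrow> q \<in> S \<Longrightarrow> r \<in> S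
     \<Longrightarrow> q \<noteq> r \<Longrightarrow> False"
  proof -
    fix p q r assume h: "x \<in> open_segment p q" "x \<in> open_segment p r" "p \<in> S" "q \<in> S" "r \<in> S" "q \<noteq> r"
    have "collinear {p,q,r}" using disj_cross[OF h(1) h(2)] .
    moreover have "p \<noteq> q" "p \<noteq> r" using seg_ne h(1,2) by auto
    ultimately show False using gp' h by blast
  qed
  have x': "x \<in> open_segment b a" "x \<in> open_segment d c" using x open_segment_commute by blast+
  assume "{a,b} \<inter> {c,d} \<noteq> {}"
  then have "a = c \<or> a = d \<or> b = c \<or> b = d" by auto
  then show False
  proof (elim disjE)
    assume "a = c" then show False using key[OF x(1)] x(2) S ne by auto
  next
    assume "a = d" then show False using key[OF x(1)] x'(2) S ne by (auto simp: insert_commute)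
  next
    assume "b = c" then show False using key[OF x'(1)] x(2) S ne by (auto simp: insert_commute)
  next
    assume "b = d" then show False using key[OF x'(1)] x'(2) S ne by (auto simp: insert_commute)
  qed
qed



lemma edge_sub:
  assumes "MinBST S R B T" "e \<in> T"
  shows "e \<subseteq> S"
proof -
  have w: "\<forall>e\<in>T. \<exists>x y. e = {x, y} \<and> x \<noteq> y \<and> x \<in> S \<and> y \<in> S"
    using assms(1) unfolding MinBST_def bichromatic_spanning_tree_def spanning_tree_def by (elim conjE) assumption
  then obtain x y where "e = {x,y}" "x \<in> S" "y \<in> S" using assms(2) by blast
  then show ?thesis by simp
qed

lemma edge_col:
  assumes "MinBST S R B T" "{a,b} \<in> T"
  shows "(a \<in> R \<and> b \<in> B) \<or> (a \<in> B \<and> b \<in> R)"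
proof -
  have w: "\<forall>e\<in>T. \<exists>r b. r \<in> R \<and> b \<in> B \<and> e = {r, b}"
    using assms(1) unfolding MinBST_def bichromatic_spanning_tree_def by (elim conjE) assumption
  then obtain r c where "r \<in> R" "c \<in> B" "{a,b} = {r,c}" using assms(2) by blast
  then show ?thesis by (auto simp: doubleton_eq_iff)
qed

lemma cross_disj:
  assumes gp: "general_position S" and M: "MinBST S R B T" and e: "e1 \<in> T" "e2 \<in> T" "e1 \<noteq> e2"
    and cr: "edges_cross e1 e2"
  shows "e1 \<inter> e2 = {}"
proof -
  obtain a b c d where abcd: "e1 = {a,b}" "e2 = {c,d}" "open_segment a b \<inter> open_segment c d \<noteq> {}"
    using cr unfolding edges_cross_def by blast
  then obtain x where "x \<in> open_segment a b" "x \<in> open_segment c d" by blast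
  moreover have "a \<in> S" "b \<in> S" "c \<in> S" "d \<in> S" using edge_sub[OF M e(1)] edge_sub[OF M e(2)] abcd by auto
  ultimately show ?thesis using disjoint_edges[OF gp] abcd e(3) by blast
qed

lemma core:
  assumes fin: "finite S" and RB: "R \<union> B = S" and dis: "R \<inter> B = {}"
    and gp: "general_position S" and M: "MinBST S R B T"
    and e: "e1 \<in> T" "e2 \<in> T" "e1 \<noteq> e2"
    and cr: "edges_cross e1 e2" and jp: "joining_path T e1 e2 p"
    and h1: "hd p \<in> e1" and h2: "last p \<in> e2"
  shows "\<not> ((hd p \<in> R \<and> last p \<in> R) \<or> (hd p \<in> B \<and> last p \<in> B))"
proof
  assume same: "(hd p \<in> R \<and> last p \<in> R) \<or> (hd p \<in> B \<and> last p \<in> B)"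
  obtain a0 b0 c0 d0 where abcd: "e1 = {a0,b0}" "e2 = {c0,d0}" "open_segment a0 b0 \<inter> open_segment c0 d0 \<noteq> {}"
    using cr unfolding edges_cross_def by blast
  then obtain x where x: "x \<in> open_segment a0 b0" "x \<in> open_segment c0 d0" by blast
  define b where "b = hd p"
  define c where "c = last p"
  obtain a where a: "e1 = {a, b}" "x \<in> open_segment a b" using reorder[OF abcd(1) x(1)] h1 unfolding b_def by blast
  obtain d where d0: "e2 = {d, c}" "x \<in> open_segment d c" using reorder[OF abcd(2) x(2)] h2 unfolding c_def by blast
  have d: "e2 = {c, d}" "x \<in> open_segment c d" using d0 by (auto simp: insert_commute open_segment_commute)
  have pp: "is_path T p" using jp unfolding joining_path_def by (elim conjE)
  have c1: "card (set p \<inter> e1) = 1" using jp unfolding joining_path_def by (elim conjE)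
  have c2: "card (set p \<inter> e2) = 1" using jp unfolding joining_path_def by (elim conjE)
  have pne: "p \<noteq> []" using pp unfolding is_path_def by blast
  have bp: "b \<in> set p" unfolding b_def using hd_in_set[OF pne] .
  have cp: "c \<in> set p" unfolding c_def using last_in_set[OF pne] .
  have ab: "a \<noteq> b" using seg_ne a(2) .
  have cd: "c \<noteq> d" using seg_ne d(2) .
  have "set p \<inter> e1 = {b}" using c1 bp a(1) by (metis IntI card_1_singletonE insertI2 singletonD singletonI)
  then have anp: "a \<notin> set p" using ab a(1) by blast
  have "set p \<inter> e2 = {c}" using c2 cp d(1) by (metis IntI card_1_singletonE insertI1 singletonD)
  then have dnp: "d \<notin> set p" using cd d(1) by auto
  have S1: "a \<in> S" "b \<in> S" using edge_sub[OF M e(1)] a(1) by auto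
  have S2: "c \<in> S" "d \<in> S" using edge_sub[OF M e(2)] d(1) by auto
  have dj: "{a,b} \<inter> {c,d} = {}" using cross_disj[OF gp M e cr] a(1) d(1) by simp
  have colab: "(a \<in> R \<and> b \<in> B) \<or> (a \<in> B \<and> b \<in> R)" using edge_col[OF M] e(1) a(1) by simp
  have colcd: "(c \<in> R \<and> d \<in> B) \<or> (c \<in> B \<and> d \<in> R)" using edge_col[OF M] e(2) d(1) by simp
  have same': "(b \<in> R \<and> c \<in> R) \<or> (b \<in> B \<and> c \<in> B)" using same unfolding b_def c_def .
  have colac: "(a \<in> R \<and> c \<in> B) \<or> (a \<in> B \<and> c \<in> R)" using colab same' dis by blast
  have coldb: "(d \<in> R \<and> b \<in> B) \<or> (d \<in> B \<and> b \<in> R)" using colcd same' dis by blast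
  have "\<not> collinear {a,b,c}"
    using gp S1 S2 ab dj unfolding general_position_def by auto
  then have ineq: "dist a c + dist b d < dist a b + dist c d" using geo a(2) d(2) by blast
  show False
  proof (cases "dist a c < dist a b")
    case True
    have eT: "{a,b} \<in> T" using e(1) a(1) by simp
    show False using exch[OF fin RB M eT pp b_def[symmetric] c_def[symmetric] anp S2(1) colac True] .
  next
    case False
    then have lt: "dist d b < dist d c" using ineq by (simp add: dist_commute)
    have eT: "{d,c} \<in> T" using e(2) d0(1) by simp
    have rp: "is_path T (rev p)" using is_path_rev[OF pp] .
    have "hd (rev p) = c" "last (rev p) = b" unfolding b_def c_def using pne by (simp_all add: hd_rev last_rev)
    moreover have "d \<notin> set (rev p)" using dnp by simp
    ultimately show False using exch[OF fin RB M eT rp _ _ _ S1(2) coldb lt] by blast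
  qed
qed

lemma cross_sym: "edges_cross e1 e2 \<Longrightarrow> edges_cross e2 e1"
  unfolding edges_cross_def by blast

theorem lemma3:
  fixes S R B :: "point set" and T :: "point set set"
    and e1 e2 :: "point set" and p :: "point list"
  assumes "finite S"
    and "R \<union> B = S" and "R \<inter> B = {}" and "R \<noteq> {}" and "B \<noteq> {}"
    and "general_position S"
    and "MinBST S R B T"
    and "e1 \<in> T" and "e2 \<in> T" and "e1 \<noteq> e2"
    and "edges_cross e1 e2"
    and "joining_path T e1 e2 p"
    and "\<forall>q. joining_path T e1 e2 q \<longrightarrow> length p \<le> length q"
  shows "(hd p \<in> R \<and> last p \<in> B) \<or> (hd p \<in> B \<and> last p \<in> R)"
proof -
  have dj: "e1 \<inter> e2 = {}" using cross_disj[OF assms(6,7,8,9,10,11)] .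
  have hl: "(hd p \<in> e1 \<and> last p \<in> e2) \<or> (hd p \<in> e2 \<and> last p \<in> e1)"
    using min_path[OF assms(12,13) dj] .
  have inS: "hd p \<in> S" "last p \<in> S" using hl edge_sub[OF assms(7) assms(8)] edge_sub[OF assms(7) assms(9)] by blast+
  have ns: "\<not> ((hd p \<in> R \<and> last p \<in> R) \<or> (hd p \<in> B \<and> last p \<in> B))"
    using hl
  proof
    assume "hd p \<in> e1 \<and> last p \<in> e2"
    then show ?thesis using core[OF assms(1,2,3,6,7,8,9,10,11,12)] by blast
  next
    assume h: "hd p \<in> e2 \<and> last p \<in> e1"
    have pp: "is_path T p" using assms(12) unfolding joining_path_def by (elim conjE)
    have pne: "p \<noteq> []" using pp unfolding is_path_def by blast
    have jr: "joining_path T e2 e1 p"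
      using assms(12) unfolding joining_path_def by simp
    show ?thesis
      using core[OF assms(1,2,3,6,7,9,8) assms(10)[symmetric] cross_sym[OF assms(11)] jr] h by simp
  qed
  show ?thesis using ns inS assms(2,3) by blast
qed


end
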